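(* The Monroe–Harsanyi–approval (MHA) and Monroe–Rawls–approval (MRA) rules fail the lower quota. Let $\mathcal C=\{c_1,\dots,c_8\}$, $S=7$, and $|\mathcal V|=10$, with - $B(\{c_1,c_2,c_3,c_4\})=6$; - $B(\{c_5\})=B(\{c_6\})=B(\{c_7\})=B(\{c_8\})=1$; - all other values of $B$ equal to $0$. With $\mathcal A=y_1=\{c_1,c_2,c_3,c_4\}$ and $q=\frac{6}{10}\cdot7$, one has $|\mathcal A|\ge\lfloor q\rfloor=4$. Nevertheless, every $\mathcal W\in\mathrm{MHA}(\sigma)$ and every $\mathcal W\in\mathrm{MRA}(\sigma)$ satisfies $|\mathcal W\cap\{c_1,c_2,c_3,c_4\}|=3<4$.
   Context: An approval-based multi-winner election is a tuple $\sigma=\langle \mathcal V,\mathcal C,S,B\rangle$, where $\mathcal V$ is a finite set of agents, $\mathcal C$ is a finite set of candidates, $1\le S\le|\mathcal C|$ is an integer, and $B:2^{\mathcal C}\to\mathbb N$ gives, for each $\mathcal A\subseteq\mathcal C$, the number $B(\mathcal A)$ of agents whose ballot is exactly $\mathcal A$. For $\mathcal W\subseteq\mathcal C$ with $|\mathcal W|=S$, the set $\mathfrak M_{\sigma,\mathcal W}$ of Monroe assignment functions consists of all $M:2^{\mathcal C}\times\mathcal W\to\mathbb N$ such that: - $\sum_{c\in\mathcal W}M(\mathcal A,c)=B(\mathcal A)$ for every $\mathcal A\subseteq\mathcal C$; - $\lfloor|\mathcal V|/S\rfloor\le\sum_{\mathcal A}M(\mathcal A,c)\le\lceil|\mathcal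 V|/S\rceil$ for every $c\in\mathcal W$. The MHA rule is $\mathrm{MHA}(\sigma)=\operatorname{argmin}_{\mathcal W\subseteq\mathcal C,|\mathcal W|=S}\min_{M\in\mathfrak M_{\sigma,\mathcal W}}\sum_{\mathcal A\subseteq\mathcal C}\sum_{c\in\mathcal W,c\notin\mathcal A}M(\mathcal A,c)$. For the MRA rule, let $\mathrm{MRA}_0(\sigma)$ be the set of $S$-subsets $\mathcal W$ for which some $M\in\mathfrak M_{\sigma,\mathcal W}$ has $\sum_{\mathcal A}\sum_{c\in\mathcal W,c\notin\mathcal A}M(\mathcal A,c)=0$. Then $\mathrm{MRA}(\sigma)=\mathrm{MRA}_0(\sigma)$ if this set is non-empty; otherwise $\mathrm{MRA}(\sigma)$ is the set of all $S$-subsets of $\mathcal C$. *)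

theory Defs
  imports Complex_Main
begin

text \<open>An approval election is given by the candidate set C, the committee size S and
  the ballot-count function B (B A = number of agents whose ballot is exactly A).\<close>

definition num_voters :: "'a set \<Rightarrow> ('a set \<Rightarrow> nat) \<Rightarrow> nat" where
  "num_voters C B = (\<Sum>A\<in>Pow C. B A)"

definition monroe_assignments ::
  "'a set \<Rightarrow> nat \<Rightarrow> ('a set \<Rightarrow> nat) \<Rightarrow> 'a set \<Rightarrow> ('a set \<Rightarrow> 'a \<Rightarrow> nat) set" where
  "monroe_assignments C S B W =
     {M. (\<forall>A\<in>Pow C. (\<Sum>c\<in>W. M A c) = B A) \<and>
         (\<forall>c\<in>W. \<lfloor>real (num_voters C B) / real S\<rfloor> \<le> int (\<Sum>A\<in>Pow C. M A c) \<and>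
                 int (\<Sum>A\<in>Pow C. M A c) \<le> \<lceil>real (num_voters C B) / real S\<rceil>)}"

text \<open>Number of agents assigned to a candidate they do not approve.\<close>
definition monroe_cost :: "'a set \<Rightarrow> 'a set \<Rightarrow> ('a set \<Rightarrow> 'a \<Rightarrow> nat) \<Rightarrow> nat" where
  "monroe_cost C W M = (\<Sum>A\<in>Pow C. \<Sum>c\<in>W - A. M A c)"

definition committees :: "'a set \<Rightarrow> nat \<Rightarrow> 'a set set" where
  "committees C S = {W. W \<subseteq> C \<and> card W = S}"

text \<open>Minimum over Monroe assignments of the cost of W (over naturals, the minimum is attained
  whenever the set of assignments is nonempty).\<close>
definition monroe_score :: "'a set \<Rightarrow> nat \<Rightarrow> ('a set \<Rightarrow> nat) \<Rightarrow> 'a set \<Rightarrow> nat" where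
  "monroe_score C S B W = (INF M\<in>monroe_assignments C S B W. monroe_cost C W M)"

definition MHA :: "'a set \<Rightarrow> nat \<Rightarrow> ('a set \<Rightarrow> nat) \<Rightarrow> 'a set set" where
  "MHA C S B = {W \<in> committees C S.
      monroe_assignments C S B W \<noteq> {} \<and>
      (\<forall>W'\<in>committees C S. monroe_assignments C S B W' \<noteq> {} \<longrightarrow>
          monroe_score C S B W \<le> monroe_score C S B W')}"

definition MRA0 :: "'a set \<Rightarrow> nat \<Rightarrow> ('a set \<Rightarrow> nat) \<Rightarrow> 'a set set" where
  "MRA0 C S B = {W \<in> committees C S.
      \<exists>M\<in>monroe_assignments C S B W. monroe_cost C W M = 0}"

definition MRA :: "'a set \<Rightarrow> nat \<Rightarrow> ('a set \<Rightarrow> nat) \<Rightarrow> 'a set set" where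
  "MRA C S B = (if MRA0 C S B \<noteq> {} then MRA0 C S B else committees C S)"

text \<open>The example: candidates c_i = i for i = 1..8.\<close>
definition ex_C :: "nat set" where "ex_C = {1..8}"

definition ex_B :: "nat set \<Rightarrow> nat" where
  "ex_B A = (if A = {1,2,3,4} then 6
             else if A = {5} \<or> A = {6} \<or> A = {7} \<or> A = {8} then 1 else 0)"

end

theory Submission
  imports Defs
begin

lemma sum_supp: "(\<Sum>A\<in>Pow ex_C. ex_B A) = (\<Sum>A\<in>{{1,2,3,4},{5},{6},{7},{8}}. ex_B A)"
  by (rule sum.mono_neutral_right) (auto simp: ex_C_def ex_B_def)

lemma nv: "num_voters ex_C ex_B = 10"
  unfolding num_voters_def sum_supp by (simp add: ex_B_def)

lemma fl: "\<lfloor>real (num_voters ex_C ex_B) / real (7::nat)\<rfloor> = 1"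
  by (simp add: nv floor_eq_iff)
lemma ce: "\<lceil>real (num_voters ex_C ex_B) / real (7::nat)\<rceil> = 2"
  by (simp add: nv ceiling_eq_iff)

lemma cost_pos:
  assumes k: "k \<in> {5..8}" and W: "W \<subseteq> ex_C" "k \<notin> W"
    and M: "M \<in> monroe_assignments ex_C 7 ex_B W"
  shows "monroe_cost ex_C W M \<ge> 1"
proof -
  have Bk: "ex_B {k} = 1" using k by (auto simp: ex_B_def)
  have kP: "{k} \<in> Pow ex_C" using k by (auto simp: ex_C_def)
  have fW: "finite W" using W finite_subset by (auto simp: ex_C_def)
  have "(\<Sum>c\<in>W. M {k} c) = 1" using M kP Bk by (auto simp: monroe_assignments_def)
  then obtain c where c: "c \<in> W" "M {k} c \<ge> 1"
    by (metis (no_types, lifting) less_one not_less sum_nonpos zero_neq_one le_zero_eq)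
  have "M {k} c \<le> (\<Sum>c\<in>W - {k}. M {k} c)"
    by (rule member_le_sum) (use c W fW in auto)
  also have "\<dots> \<le> monroe_cost ex_C W M" unfolding monroe_cost_def
    by (rule member_le_sum[where f="\<lambda>A. \<Sum>c\<in>W - A. M A c", OF kP]) (auto simp: ex_C_def)
  finally show ?thesis using c by simp
qed

definition M0 :: "nat set \<Rightarrow> nat \<Rightarrow> nat" where
  "M0 A c = (if c \<in> {2,3,4} then (if A = {1,2,3,4} then 2 else 0)
     else if c \<in> {5..8} then (if A = {c} then 1 else 0) else 0)"

definition W0 :: "nat set" where "W0 = {2,3,4,5,6,7,8}"

lemma W0_comm: "W0 \<in> committees ex_C 7"
  by (simp add: committees_def W0_def ex_C_def)

lemma M0_in: "M0 \<in> monroe_assignments ex_C 7 ex_B W0"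
proof -
  have rows: "(\<Sum>c\<in>W0. M0 A c) = ex_B A" for A
    unfolding W0_def M0_def ex_B_def by auto
  have cols: "(\<Sum>A\<in>Pow ex_C. M0 A c) \<in> {1,2}" if "c \<in> W0" for c
  proof -
    have "c \<in> {2,3,4} \<or> c \<in> {5..8}" using that by (auto simp: W0_def)
    then show ?thesis
    proof
      assume h: "c \<in> {2,3,4}"
      have "(\<Sum>A\<in>Pow ex_C. M0 A c) = (\<Sum>A\<in>Pow ex_C. if A = {1,2,3,4} then 2 else 0)"
        using h by (intro sum.cong) (auto simp: M0_def)
      also have "\<dots> = 2" by (simp add: ex_C_def)
      finally show ?thesis by simp
    next
      assume h: "c \<in> {5..8}"
      have "(\<Sum>A\<in>Pow ex_C. M0 A c) = (\<Sum>A\<in>Pow ex_C. if A = {c} then 1 else 0)"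
        using h by (intro sum.cong) (auto simp: M0_def)
      also have "\<dots> = 1" using h by (simp add: ex_C_def)
      finally show ?thesis by simp
    qed
  qed
  show ?thesis unfolding monroe_assignments_def
  proof (intro CollectI conjI ballI)
    fix c assume c: "c \<in> W0"
    from cols[OF c] show "\<lfloor>real (num_voters ex_C ex_B) / real (7::nat)\<rfloor> \<le> int (\<Sum>A\<in>Pow ex_C. M0 A c)"
      unfolding fl by (auto simp del: of_nat_sum)
    from cols[OF c] show "int (\<Sum>A\<in>Pow ex_C. M0 A c) \<le> \<lceil>real (num_voters ex_C ex_B) / real (7::nat)\<rceil>"
      unfolding ce by (auto simp del: of_nat_sum)
  qed (use rows in auto)
qed

lemma M0_cost: "monroe_cost ex_C W0 M0 = 0"
  unfolding monroe_cost_def by (intro sum.neutral ballI) (auto simp: M0_def W0_def)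

lemma comm_cases:
  assumes "W \<in> committees ex_C 7"
  obtains k where "k \<in> ex_C" "W = ex_C - {k}"
proof -
  have sub: "W \<subseteq> ex_C" and cW: "card W = 7" using assms by (auto simp: committees_def)
  have "card (ex_C - W) = 1" using sub cW by (simp add: card_Diff_subset ex_C_def finite_subset)
  then obtain k where k: "ex_C - W = {k}" using card_1_singletonE by blast
  then have "W = ex_C - {k}" using sub by blast
  with k that show ?thesis by blast
qed

lemma good_or_bad:
  assumes "W \<in> committees ex_C 7"
  shows "card (W \<inter> {1,2,3,4}) = 3 \<or> (\<exists>k\<in>{5..8}. W \<subseteq> ex_C \<and> k \<notin> W)"
proof -
  obtain k where k: "k \<in> ex_C" "W = ex_C - {k}" using comm_cases assms by blast
  then have "k \<in> {1,2,3,4} \<or> k \<in> {5..8}" by (auto simp: ex_C_def)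
  then show ?thesis
  proof
    assume h: "k \<in> {1,2,3,4}"
    have "W \<inter> {1,2,3,4} = {1,2,3,4} - {k}" using k h by (auto simp: ex_C_def)
    then show ?thesis using h by auto
  qed (use k in auto)
qed

theorem theorem13:
  shows "num_voters ex_C ex_B = 10
    \<and> card {1::nat,2,3,4} \<ge> nat \<lfloor>(6 / 10) * (7::real)\<rfloor>
    \<and> \<lfloor>(6 / 10) * (7::real)\<rfloor> = 4
    \<and> (\<forall>W\<in>MHA ex_C 7 ex_B. card (W \<inter> {1,2,3,4}) = 3)
    \<and> (\<forall>W\<in>MRA ex_C 7 ex_B. card (W \<inter> {1,2,3,4}) = 3)"
proof -
  have fl4: "\<lfloor>(6 / 10) * (7::real)\<rfloor> = 4" by (simp add: floor_eq_iff)
  have ne0: "monroe_assignments ex_C 7 ex_B W0 \<noteq> {}" using M0_in by blast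
  have sc0: "monroe_score ex_C 7 ex_B W0 = 0"
    unfolding monroe_score_def
    by (metis M0_cost M0_in cINF_lower bdd_below_bot le_zero_eq)
  have mha: "card (W \<inter> {1,2,3,4}) = 3" if "W \<in> MHA ex_C 7 ex_B" for W
  proof -
    have W: "W \<in> committees ex_C 7" "monroe_assignments ex_C 7 ex_B W \<noteq> {}"
        "monroe_score ex_C 7 ex_B W \<le> 0"
      using that W0_comm ne0 sc0 unfolding MHA_def by force+
    { fix k assume k: "k \<in> {5..8}" "W \<subseteq> ex_C" "k \<notin> W"
      have "1 \<le> monroe_score ex_C 7 ex_B W" unfolding monroe_score_def
        by (rule cINF_greatest[OF W(2)]) (rule cost_pos[OF k])
      with W(3) have False by simp }
    then show ?thesis using good_or_bad[OF W(1)] by blast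
  qed
  have mra0: "MRA0 ex_C 7 ex_B \<noteq> {}"
    unfolding MRA0_def using W0_comm M0_in M0_cost by blast
  have mra: "card (W \<inter> {1,2,3,4}) = 3" if "W \<in> MRA ex_C 7 ex_B" for W
  proof -
    from that mra0 have "W \<in> MRA0 ex_C 7 ex_B" by (simp add: MRA_def)
    then obtain M where W: "W \<in> committees ex_C 7" "M \<in> monroe_assignments ex_C 7 ex_B W"
      "monroe_cost ex_C W M = 0" unfolding MRA0_def by blast
    { fix k assume k: "k \<in> {5..8}" "W \<subseteq> ex_C" "k \<notin> W"
      from cost_pos[OF k W(2)] W(3) have False by simp }
    then show ?thesis using good_or_bad[OF W(1)] by blast
  qed
  show ?thesis using nv fl4 mha mra by simp
qed
end
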